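(* Fix $n,d$ and $J\subseteq[n]$ with $|J|=\ell$ such that $\ell\le d<n-\ell$. Then there is a bijection \[ \{C\in\mathcal{P}(n,d):\mathrm{st}(C)=J\}\longleftrightarrow\{C'\in\mathcal{P}(n,d+1):\mathrm{st}(C')=J\}. \]
   Context: $\mathcal{P}(n,d)$ is the set of words $C=C_1\cdots C_n$ in letters $\mathbf{e}$ (east step) and $\mathbf{n}$ (north step) with exactly $d$ letters $\mathbf{e}$. Scan positions left to right and mark position $i$ with $C_i=\mathbf{e}$ if the number of $j<i$ with $C_j=\mathbf{n}$ equals the number of $j<i$ with $C_j=\mathbf{e}$ that are unmarked; $\mathrm{st}(C)$ is the set of unmarked positions $i$ with $C_i=\mathbf{e}$. *)

theory Defs
  imports Main
begin

text \<open>Letters: E = east step, N = north step. Words are lists; positions are 1-indexed.\<close>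
datatype step = E | N

definition Pnd :: "nat \<Rightarrow> nat \<Rightarrow> step list set" where
  "Pnd n d = {C. length C = n \<and> length (filter (\<lambda>x. x = E) C) = d}"

text \<open>Scan: i = current position, a = number of N's before i,
  b = number of unmarked E's before i. An E at position i is marked iff a = b;
  the result is the set of unmarked E positions.\<close>
fun st_aux :: "step list \<Rightarrow> nat \<Rightarrow> nat \<Rightarrow> nat \<Rightarrow> nat set" where
  "st_aux [] i a b = {}"
| "st_aux (N # cs) i a b = st_aux cs (Suc i) (Suc a) b"
| "st_aux (E # cs) i a b =
     (if a = b then st_aux cs (Suc i) a b else insert i (st_aux cs (Suc i) a (Suc b)))"

definition st :: "step list \<Rightarrow> nat set" where
  "st C = st_aux C 1 0 0"

end

theory Submission
  imports Defs
begin

fun sth :: "step list \<Rightarrow> nat \<Rightarrow> nat \<Rightarrow> nat set" where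
  "sth [] i h = {}"
| "sth (N # cs) i h = sth cs (Suc i) (Suc h)"
| "sth (E # cs) i h = (if h = 0 then sth cs (Suc i) 0 else insert i (sth cs (Suc i) (h - 1)))"

fun fin :: "step list \<Rightarrow> nat \<Rightarrow> nat" where
  "fin [] h = h"
| "fin (N # cs) h = fin cs (Suc h)"
| "fin (E # cs) h = fin cs (h - 1)"

fun noflat :: "step list \<Rightarrow> nat \<Rightarrow> bool" where
  "noflat [] h = True"
| "noflat (N # cs) h = noflat cs (Suc h)"
| "noflat (E # cs) h = (0 < h \<and> noflat cs (h - 1))"

abbreviation cE :: "step list \<Rightarrow> nat" where "cE cs \<equiv> length (filter (\<lambda>x. x = E) cs)"

lemma st_aux_sth: "b \<le> a \<Longrightarrow> st_aux cs i a b = sth cs i (a - b)"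
  by (induction cs i a b rule: st_aux.induct) (auto simp: Suc_diff_le)

lemma st_sth: "st cs = sth cs 1 0"
  by (simp add: st_def st_aux_sth)

lemma sth_mem: "x \<in> sth cs i h \<Longrightarrow> i \<le> x \<and> x < i + length cs"
  by (induction cs i h rule: sth.induct) (auto split: if_splits)

lemma sth_range: "sth cs i h \<subseteq> {i..<i + length cs}"
  using sth_mem by (simp add: subset_iff)

lemma sth_fin: "finite (sth cs i h)"
  by (rule finite_subset[OF sth_range]) simp

lemma sth_append: "sth (xs @ ys) i h = sth xs i h \<union> sth ys (i + length xs) (fin xs h)"
  by (induction xs i h rule: sth.induct) auto

lemma sth_shift: "noflat ys h \<Longrightarrow> sth ys j (Suc h) = sth ys j h"
proof (induction ys j h rule: sth.induct)
  case (3 cs i h)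
  then show ?case by (cases h) auto
qed auto

lemma fin_shift: "noflat ys h \<Longrightarrow> fin ys (Suc h) = Suc (fin ys h)"
  by (induction ys h rule: fin.induct) (auto simp: Suc_diff_Suc)

lemma fin_append: "fin (a @ b) h = fin b (fin a h)"
  by (induction a h rule: fin.induct) auto

lemma noflat_append: "noflat (a @ b) h \<longleftrightarrow> noflat a h \<and> noflat b (fin a h)"
  by (induction a h rule: noflat.induct) auto

lemma card_fin: "fin cs h + card (sth cs i h) + cE cs = h + length cs"
proof (induction cs i h rule: sth.induct)
  case (3 cs i h)
  have "i \<notin> sth cs (Suc i) (h - 1)" using sth_range[of cs "Suc i" "h - 1"] by auto
  show ?case
  proof (cases h)
    case 0
    then show ?thesis using 3(1) by simp
  next
    case (Suc k)
    then show ?thesis using 3(2) \<open>i \<notin> sth cs (Suc i) (h - 1)\<close> by (simp add: sth_fin)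
  qed
qed auto

lemma card_noflat: "noflat cs h \<Longrightarrow> card (sth cs i h) = cE cs"
proof (induction cs i h rule: sth.induct)
  case (3 cs i h)
  have "i \<notin> sth cs (Suc i) (h - 1)" using sth_range[of cs "Suc i" "h - 1"] by auto
  show ?case
    using 3 \<open>i \<notin> sth cs (Suc i) (h - 1)\<close> by (cases h) (simp_all add: sth_fin)
qed auto

lemma decN: "0 < fin cs h \<Longrightarrow> (0 < h \<and> noflat cs (h - 1)) \<or>
   (\<exists>xs ys. cs = xs @ N # ys \<and> fin xs h = 0 \<and> noflat ys 0)"
proof (induction cs arbitrary: h)
  case (Cons c cs)
  show ?case
  proof (cases c)
    case E
    with Cons.prems have "0 < fin cs (h - 1)" by simp
    from Cons.IH[OF this] show ?thesis
    proof
      assume a: "0 < h - 1 \<and> noflat cs (h - 1 - 1)"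
      have "0 < h \<and> noflat (c # cs) (h - 1)" using a E by (cases h) simp_all
      then show ?thesis by (rule disjI1)
    next
      assume "\<exists>xs ys. cs = xs @ N # ys \<and> fin xs (h - 1) = 0 \<and> noflat ys 0"
      then obtain xs ys where "cs = xs @ N # ys" "fin xs (h - 1) = 0" "noflat ys 0" by blast
      then show ?thesis using E by (intro disjI2 exI[of _ "E # xs"] exI[of _ ys]) simp
    qed
  next
    case N
    with Cons.prems have "0 < fin cs (Suc h)" by simp
    from Cons.IH[OF this] show ?thesis
    proof
      assume a: "0 < Suc h \<and> noflat cs (Suc h - 1)"
      show ?thesis
      proof (cases h)
        case 0
        then show ?thesis using a N by (intro disjI2 exI[of _ "[]"] exI[of _ cs]) simp
      next
        case (Suc k)
        then show ?thesis using a N by (intro disjI1) simp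
      qed
    next
      assume "\<exists>xs ys. cs = xs @ N # ys \<and> fin xs (Suc h) = 0 \<and> noflat ys 0"
      then obtain xs ys where "cs = xs @ N # ys" "fin xs (Suc h) = 0" "noflat ys 0" by blast
      then show ?thesis using N by (intro disjI2 exI[of _ "N # xs"] exI[of _ ys]) simp
    qed
  qed
qed simp

lemma decE: "noflat cs h \<or> (\<exists>xs ys. cs = xs @ E # ys \<and> fin xs h = 0 \<and> noflat ys 0)"
proof (induction cs arbitrary: h)
  case (Cons c cs)
  show ?case
  proof (cases c)
    case E
    from Cons.IH[of "h - 1"] show ?thesis
    proof
      assume a: "noflat cs (h - 1)"
      show ?thesis
      proof (cases h)
        case 0
        then show ?thesis using a E by (intro disjI2 exI[of _ "[]"] exI[of _ cs]) simp
      next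
        case (Suc k)
        then show ?thesis using a E by (intro disjI1) simp
      qed
    next
      assume "\<exists>xs ys. cs = xs @ E # ys \<and> fin xs (h - 1) = 0 \<and> noflat ys 0"
      then obtain xs ys where "cs = xs @ E # ys" "fin xs (h - 1) = 0" "noflat ys 0" by blast
      then show ?thesis using E by (intro disjI2 exI[of _ "E # xs"] exI[of _ ys]) simp
    qed
  next
    case N
    from Cons.IH[of "Suc h"] show ?thesis
    proof
      assume "noflat cs (Suc h)" then show ?thesis using N by (intro disjI1) simp
    next
      assume "\<exists>xs ys. cs = xs @ E # ys \<and> fin xs (Suc h) = 0 \<and> noflat ys 0"
      then obtain xs ys where "cs = xs @ E # ys" "fin xs (Suc h) = 0" "noflat ys 0" by blast
      then show ?thesis using N by (intro disjI2 exI[of _ "N # xs"] exI[of _ ys]) simp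
    qed
  qed
qed simp

lemma uniq_aux:
  assumes "xs' = xs @ c # zs" "ys = zs @ c # ys'" "fin xs 0 = 0" "noflat ys 0" "fin xs' 0 = 0"
  shows False
proof -
  have nz: "noflat zs 0" and nc: "noflat (c # ys') (fin zs 0)"
    using assms(2,4) noflat_append by auto
  have f: "fin (c # zs) 0 = 0" using assms(1,3,5) fin_append by simp
  show False
  proof (cases c)
    case N then show ?thesis using f fin_shift[OF nz] by simp
  next
    case E then show ?thesis using f nc by simp
  qed
qed

lemma uniq:
  assumes "xs @ c # ys = xs' @ c # ys'" "fin xs 0 = 0" "noflat ys 0" "fin xs' 0 = 0" "noflat ys' 0"
  shows "xs = xs' \<and> ys = ys'"
proof -
  from assms(1) obtain us where
    "(xs = xs' @ us \<and> us @ c # ys = c # ys') \<or> (xs @ us = xs' \<and> c # ys = us @ c # ys')"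
    by (auto simp: append_eq_append_conv2)
  then show ?thesis
  proof
    assume a: "xs = xs' @ us \<and> us @ c # ys = c # ys'"
    show ?thesis
    proof (cases us)
      case (Cons u us')
      then show ?thesis using a uniq_aux[of xs xs' c us' ys' ys] assms by auto
    qed (use a in auto)
  next
    assume a: "xs @ us = xs' \<and> c # ys = us @ c # ys'"
    show ?thesis
    proof (cases us)
      case (Cons u us')
      then show ?thesis using a uniq_aux[of xs' xs c us' ys ys'] assms by auto
    qed (use a in auto)
  qed
qed

theorem lemma4p13:
  fixes n d l :: nat and J :: "nat set"
  assumes "J \<subseteq> {1..n}" and "card J = l" and "l \<le> d" and "d < n - l"
  shows "\<exists>f. bij_betw f {C \<in> Pnd n d. st C = J} {C' \<in> Pnd n (Suc d). st C' = J}"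
proof -
  define D where "D = {(xs, ys). fin xs 0 = 0 \<and> noflat ys 0 \<and> length xs + length ys + 1 = n
     \<and> cE xs + cE ys = d \<and> sth xs 1 0 \<union> sth ys (length xs + 2) 0 = J}"
  define F where "F = (\<lambda>(xs, ys). xs @ N # ys)"
  define G where "G = (\<lambda>(xs, ys). xs @ E # ys)"
  have stF: "st (xs @ N # ys) = sth xs 1 0 \<union> sth ys (length xs + 2) 0" if "noflat ys 0" "fin xs 0 = 0" for xs ys
    using sth_shift[OF that(1)] that(2) by (simp add: st_sth sth_append)
  have stG: "st (xs @ E # ys) = sth xs 1 0 \<union> sth ys (length xs + 2) 0" if "fin xs 0 = 0" for xs ys
    using that by (simp add: st_sth sth_append)
  have injF: "inj_on F D"
  proof (rule inj_onI)
    fix p q assume pq: "p \<in> D" "q \<in> D" "F p = F q"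
    obtain xs ys where p: "p = (xs, ys)" by (cases p)
    obtain xs' ys' where q: "q = (xs', ys')" by (cases q)
    have "xs = xs' \<and> ys = ys'"
      by (rule uniq[of xs N ys xs' ys']) (use pq p q in \<open>simp_all add: F_def D_def\<close>)
    then show "p = q" using p q by simp
  qed
  have injG: "inj_on G D"
  proof (rule inj_onI)
    fix p q assume pq: "p \<in> D" "q \<in> D" "G p = G q"
    obtain xs ys where p: "p = (xs, ys)" by (cases p)
    obtain xs' ys' where q: "q = (xs', ys')" by (cases q)
    have "xs = xs' \<and> ys = ys'"
      by (rule uniq[of xs E ys xs' ys']) (use pq p q in \<open>simp_all add: G_def D_def\<close>)
    then show "p = q" using p q by simp
  qed
  have imF: "F ` D = {C \<in> Pnd n d. st C = J}"
  proof
    show "F ` D \<subseteq> {C \<in> Pnd n d. st C = J}"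
    proof
      fix C assume "C \<in> F ` D"
      then obtain xs ys where p: "(xs, ys) \<in> D" "C = xs @ N # ys" unfolding F_def by auto
      then show "C \<in> {C \<in> Pnd n d. st C = J}" using stF[of ys xs] by (simp add: D_def Pnd_def)
    qed
  next
    show "{C \<in> Pnd n d. st C = J} \<subseteq> F ` D"
    proof
      fix C assume C: "C \<in> {C \<in> Pnd n d. st C = J}"
      hence len: "length C = n" "cE C = d" "sth C 1 0 = J" by (auto simp: Pnd_def st_sth)
      have "fin C 0 + l + d = n" using card_fin[of C 0 1] len assms(2) by simp
      hence "0 < fin C 0" using assms(4) by simp
      from decN[OF this] obtain xs ys where "C = xs @ N # ys" "fin xs 0 = 0" "noflat ys 0" by auto
      then show "C \<in> F ` D" using len stF[of ys xs]
        unfolding F_def D_def by (intro image_eqI[of _ _ "(xs, ys)"]) (auto simp: st_sth)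
    qed
  qed
  have imG: "G ` D = {C \<in> Pnd n (Suc d). st C = J}"
  proof
    show "G ` D \<subseteq> {C \<in> Pnd n (Suc d). st C = J}"
    proof
      fix C assume "C \<in> G ` D"
      then obtain xs ys where p: "(xs, ys) \<in> D" "C = xs @ E # ys" unfolding G_def by auto
      then show "C \<in> {C \<in> Pnd n (Suc d). st C = J}" using stG[of xs ys] by (simp add: D_def Pnd_def)
    qed
  next
    show "{C \<in> Pnd n (Suc d). st C = J} \<subseteq> G ` D"
    proof
      fix C assume C: "C \<in> {C \<in> Pnd n (Suc d). st C = J}"
      hence len: "length C = n" "cE C = Suc d" "sth C 1 0 = J" by (auto simp: Pnd_def st_sth)
      have "\<not> noflat C 0" using card_noflat[of C 0 1] len assms(2,3) by auto
      with decE[of C 0] obtain xs ys where "C = xs @ E # ys" "fin xs 0 = 0" "noflat ys 0" by auto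
      then show "C \<in> G ` D" using len stG[of xs ys]
        unfolding G_def D_def by (intro image_eqI[of _ _ "(xs, ys)"]) (auto simp: st_sth)
    qed
  qed
  have bF: "bij_betw F D {C \<in> Pnd n d. st C = J}" using injF imF by (simp add: bij_betw_def)
  have bG: "bij_betw G D {C \<in> Pnd n (Suc d). st C = J}" using injG imG by (simp add: bij_betw_def)
  show ?thesis using bij_betw_trans[OF bij_betw_the_inv_into[OF bF] bG] by blast
qed

end
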